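(* Let $0\le\beta\le 1$ and let $f\in\mathcal{A}_{\beta}$ with $f(z)=z+\sum_{n=2}^\infty a_nz^n$. Let $\gamma_1=\tfrac12 a_2$, $\gamma_2=\tfrac12\left(a_3-\tfrac12 a_2^2\right)$, $\gamma_3=\tfrac12\left(a_4-a_2a_3+\tfrac13 a_2^3\right)$. Then \[ |\gamma_m|\le \frac{1}{(m+1)-m\beta},\qquad m=1,2,3. \] Moreover, all three bounds are sharp: for each $m\in\{1,2,3\}$ there exists $f\in\mathcal{A}_\beta$ for which equality holds.
   Context: $\mathbb{D}=\{z\in\mathbb{C}:|z|<1\}$. $\mathcal{A}$ denotes the class of holomorphic functions $f$ on $\mathbb{D}$ with $f(0)=0$, $f'(0)=1$, written $f(z)=z+\sum_{n\ge2}a_nz^n$. For $\beta\in[0,1]$, $\mathcal{A}_{\beta}=\{f\in\mathcal{A}: \operatorname{Re}\big(\beta\, f(z)/z+(1-\beta)f'(z)\big)>0 \text{ for all } z\in\mathbb{D}\}$ (with $f(z)/z$ extended by $1$ at $z=0$). The numbers $\gamma_n$ are the logarithmic coefficients, defined by $\log(f(z)/z)=2\sum_{n\ge1}\gamma_n z^n$ near $0$; the formulas for $\gamma_1,\gamma_2,\gamma_3$ above are the resulting expressions. *)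

theory Defs
  imports "HOL-Complex_Analysis.Complex_Analysis"
begin

definition taylor_coeff :: "(complex \<Rightarrow> complex) \<Rightarrow> nat \<Rightarrow> complex" where
  "taylor_coeff f n = (deriv ^^ n) f 0 / of_nat (fact n)"

definition class_A :: "(complex \<Rightarrow> complex) \<Rightarrow> bool" where
  "class_A f \<longleftrightarrow> f holomorphic_on ball 0 1 \<and> f 0 = 0 \<and> deriv f 0 = 1"

definition class_A_beta :: "real \<Rightarrow> (complex \<Rightarrow> complex) \<Rightarrow> bool" where
  "class_A_beta \<beta> f \<longleftrightarrow> class_A f \<and>
     (\<forall>z\<in>ball 0 1. Re (of_real \<beta> * (if z = 0 then 1 else f z / z)
                        + of_real (1 - \<beta>) * deriv f z) > 0)"

definition log_coeff :: "(complex \<Rightarrow> complex) \<Rightarrow> nat \<Rightarrow> complex" where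
  "log_coeff f m =
     (let a2 = taylor_coeff f 2; a3 = taylor_coeff f 3; a4 = taylor_coeff f 4 in
      if m = 1 then a2 / 2
      else if m = 2 then (a3 - a2^2 / 2) / 2
      else if m = 3 then (a4 - a2 * a3 + a2^3 / 3) / 2
      else undefined)"

end

theory Submission
  imports Defs
begin


lemma exp_unique:
  fixes f g :: "complex \<Rightarrow> complex"
  assumes "f has_fps_expansion F" "g has_fps_expansion G" "r > 0" "\<forall>z\<in>ball 0 r. f z = g z"
  shows "F = G"
proof (rule fps_ext)
  fix n
  have "eventually (\<lambda>z. z \<in> ball 0 r) (nhds (0::complex))"
    using assms(3) by (intro eventually_nhds_in_open) auto
  hence ev: "eventually (\<lambda>z. f z = g z) (nhds 0)"
    by eventually_elim (use assms(4) in auto)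
  have "fps_nth F n = (deriv ^^ n) f 0 / fact n" by (rule fps_nth_fps_expansion[OF assms(1)])
  also have "(deriv ^^ n) f 0 = (deriv ^^ n) g 0" by (intro higher_deriv_cong_ev ev refl)
  also have "\<dots> / fact n = fps_nth G n" by (rule fps_nth_fps_expansion[OF assms(2), symmetric])
  finally show "fps_nth F n = fps_nth G n" .
qed

lemma holo_exp:
  fixes f :: "complex \<Rightarrow> complex"
  assumes "f holomorphic_on ball 0 1"
  shows "f has_fps_expansion fps_expansion f 0"
  using assms by (intro has_fps_expansion_fps_expansion[of "ball 0 1"]) auto

lemma exp_at0:
  fixes f :: "complex \<Rightarrow> complex"
  assumes "f has_fps_expansion F"
  shows "fps_nth F 0 = f 0"
  using assms by (auto simp: has_fps_expansion_def eval_fps_at_0 dest: eventually_nhds_x_imp_x)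

lemma mult_z_exp:
  fixes f g :: "complex \<Rightarrow> complex"
  assumes "f holomorphic_on ball 0 1" "g holomorphic_on ball 0 1" "\<forall>z\<in>ball 0 1. f z = z * g z"
  shows "fps_expansion f 0 = fps_X * fps_expansion g 0"
proof (rule exp_unique[OF holo_exp[OF assms(1)] _ _ assms(3)])
  show "(\<lambda>z. z * g z) has_fps_expansion fps_X * fps_expansion g 0"
    by (intro has_fps_expansion_mult has_fps_expansion_fps_X holo_exp assms(2))
qed simp

lemma moebius_ident:
  fixes a w :: complex
  shows "(norm (1 - cnj a * w))^2 - (norm (w - a))^2 = (1 - (norm a)^2) * (1 - (norm w)^2)"
  by (simp only: cmod_power2) (simp add: algebra_simps power2_eq_square)

lemma moebius_lt:
  fixes a w :: complex
  assumes "norm a < 1" "norm w < 1"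
  shows "norm ((w - a) / (1 - cnj a * w)) < 1"
proof -
  have "(norm a)^2 < 1^2" "(norm w)^2 < 1^2"
    using assms by (intro power_strict_mono; simp)+
  hence "(1 - (norm a)^2) * (1 - (norm w)^2) > 0"
    by (intro mult_pos_pos) auto
  hence "(norm (w - a))^2 < (norm (1 - cnj a * w))^2" using moebius_ident[of a w] by linarith
  hence lt: "norm (w - a) < norm (1 - cnj a * w)" by (rule power2_less_imp_less) simp
  hence "norm (1 - cnj a * w) > 0" by (meson norm_ge_zero le_less_trans)
  thus ?thesis using lt by (simp add: norm_divide divide_less_eq)
qed


lemma real_ineq:
  fixes x y \<mu> \<nu> :: real
  assumes "0 \<le> x" "x \<le> 1" "0 \<le> y" "y \<le> 1" "0 \<le> \<mu>" "\<mu> \<le> 2/3" "0 \<le> \<nu>" "\<nu> \<le> 7/9"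
  shows "(1 - x^2) * (1 - y^2) + (1 - x^2) * x * y^2 + \<mu> * x * (1 - x^2) * y + \<nu> * x^3 \<le> 1"
proof -
  define t where "t = (1 - x) * y"
  have id: "(1 - x^2) * (1 - y^2) + (1 - x^2) * x * y^2 + \<mu> * x * (1 - x^2) * y + \<nu> * x^3
      = 1 - x^2 + (1 + x) * (\<mu> * x * t - t^2) + \<nu> * x^3"
    by (simp add: t_def algebra_simps power2_eq_square power3_eq_cube)
  have h1: "\<mu> * x * t - t^2 \<le> \<mu>^2 * x^2 / 4"
  proof -
    have "0 \<le> (t - \<mu> * x / 2)^2" by simp
    thus ?thesis by (simp add: algebra_simps power2_eq_square)
  qed
  have h2: "(1 + x) * (\<mu> * x * t - t^2) \<le> (1 + x) * (\<mu>^2 * x^2 / 4)"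
    using h1 assms by (intro mult_left_mono) auto
  have h3: "\<mu>^2 \<le> 4/9"
  proof -
    have "\<mu>^2 \<le> (2/3)^2" using assms by (intro power_mono) auto
    thus ?thesis by (simp add: power2_eq_square)
  qed
  have h4: "(1 + x) * \<mu>^2 \<le> 2 * (4/9)"
    using assms h3 by (intro mult_mono) auto
  have h4': "\<nu> * x \<le> 7/9" using assms mult_mono[of \<nu> "7/9" x 1] by auto
  have h5: "x^2 * ((1 + x) * \<mu>^2 / 4 + \<nu> * x) \<le> x^2 * 1"
    using h4 h4' by (intro mult_left_mono) auto
  have "1 - x^2 + (1 + x) * (\<mu> * x * t - t^2) + \<nu> * x^3 \<le> 1 - x^2 + (1 + x) * (\<mu>^2 * x^2 / 4) + \<nu> * x^3"
    using h2 by linarith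
  also have "\<dots> = 1 - x^2 + x^2 * ((1 + x) * \<mu>^2 / 4 + \<nu> * x)"
    by (simp add: algebra_simps power2_eq_square power3_eq_cube)
  also have "\<dots> \<le> 1" using h5 by simp
  finally show ?thesis unfolding id .
qed

lemma norm4: "norm (A - B + C + D :: complex) \<le> norm A + norm B + norm C + norm D"
proof -
  have "norm (A - B + C + D) \<le> norm (A - B + C) + norm D" by (rule norm_triangle_ineq)
  moreover have "norm (A - B + C) \<le> norm (A - B) + norm C" by (rule norm_triangle_ineq)
  moreover have "norm (A - B) \<le> norm A + norm B" by (rule norm_triangle_ineq4)
  ultimately show ?thesis by linarith
qed

lemma key_ineq:
  fixes a s u :: complex and \<mu> \<nu> :: real
  assumes "norm a \<le> 1" "norm s \<le> 1" "norm u \<le> 1" "0 \<le> \<mu>" "\<mu> \<le> 2/3" "0 \<le> \<nu>" "\<nu> \<le> 7/9"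
  shows "norm ((1 - a * cnj a) * ((1 - s * cnj s) * u - cnj a * s^2)
              + of_real \<mu> * a * ((1 - a * cnj a) * s) + of_real \<nu> * a^3) \<le> 1"
proof -
  define x where "x = norm a"
  define y where "y = norm s"
  have ax: "1 - a * cnj a = of_real (1 - x^2)" by (simp add: x_def complex_norm_square[symmetric])
  have sy: "1 - s * cnj s = of_real (1 - y^2)" by (simp add: y_def complex_norm_square[symmetric])
  have x01: "0 \<le> x" "x \<le> 1" and y01: "0 \<le> y" "y \<le> 1" using assms by (auto simp: x_def y_def)
  have x2: "x^2 \<le> 1" and y2: "y^2 \<le> 1" using x01 y01 by (auto simp: power_le_one)
  have na: "norm (1 - a * cnj a) = 1 - x^2" unfolding ax norm_of_real using x2 by simp
  have ns: "norm (1 - s * cnj s) = 1 - y^2" unfolding sy norm_of_real using y2 by simp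
  have "(1 - a * cnj a) * ((1 - s * cnj s) * u - cnj a * s^2) + of_real \<mu> * a * ((1 - a * cnj a) * s) + of_real \<nu> * a^3
     = (1 - a * cnj a) * ((1 - s * cnj s) * u) - (1 - a * cnj a) * (cnj a * s^2) + of_real \<mu> * a * ((1 - a * cnj a) * s) + of_real \<nu> * a^3"
    by (simp add: algebra_simps)
  also have "norm \<dots> \<le> norm ((1 - a * cnj a) * ((1 - s * cnj s) * u)) + norm ((1 - a * cnj a) * (cnj a * s^2))
       + norm (of_real \<mu> * a * ((1 - a * cnj a) * s)) + norm (of_real \<nu> * a^3)"
    by (rule norm4)
  also have "\<dots> = (1 - x^2) * ((1 - y^2) * norm u) + (1 - x^2) * x * y^2 + \<mu> * x * (1 - x^2) * y + \<nu> * x^3"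
    by (simp only: norm_mult norm_power na ns complex_mod_cnj norm_of_real x_def[symmetric] y_def[symmetric]
          abs_of_nonneg[OF assms(4)] abs_of_nonneg[OF assms(6)] mult.assoc)
  also have "\<dots> \<le> (1 - x^2) * (1 - y^2) + (1 - x^2) * x * y^2 + \<mu> * x * (1 - x^2) * y + \<nu> * x^3"
    using x2 y2 assms(3) by (simp add: mult_left_le mult_left_mono)
  also have "\<dots> \<le> 1" by (rule real_ineq) (use x01 y01 assms in auto)
  finally show ?thesis .
qed


lemma schwarz_div:
  fixes k :: "complex \<Rightarrow> complex"
  assumes kholo: "k holomorphic_on ball 0 1" and k0: "k 0 = 0"
    and klt: "\<And>z. norm z < 1 \<Longrightarrow> norm (k z) < 1"
  obtains h1 where "h1 holomorphic_on ball 0 1" "\<forall>z\<in>ball 0 1. norm (h1 z) \<le> 1"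
    "\<forall>z\<in>ball 0 1. k z = z * h1 z"
proof -
  have kle: "norm (k z) \<le> norm z" if "norm z < 1" for z
    using Schwarz_Lemma(1)[OF kholo k0 klt that] by blast
  have kd: "norm (deriv k 0) \<le> 1"
    using Schwarz_Lemma(2)[OF kholo k0 klt, of 0] by simp
  define h1 where "h1 = (\<lambda>z. if z = 0 then deriv k 0 else (k z - k 0) / (z - 0))"
  have h1holo: "h1 holomorphic_on ball 0 1" unfolding h1_def by (rule pole_lemma[OF kholo]) simp
  have h1bd: "\<forall>z\<in>ball 0 1. norm (h1 z) \<le> 1"
  proof
    fix z :: complex assume z: "z \<in> ball 0 1"
    show "norm (h1 z) \<le> 1"
    proof (cases "z = 0")
      case True thus ?thesis using kd by (simp add: h1_def)
    next
      case False
      thus ?thesis using kle[of z] z by (simp add: h1_def k0 norm_divide divide_le_eq_1)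
    qed
  qed
  have kz: "\<forall>z\<in>ball 0 1. k z = z * h1 z" by (simp add: h1_def k0)
  show ?thesis by (rule that[OF h1holo h1bd kz])
qed
lemma schur_step:
  fixes h :: "complex \<Rightarrow> complex"
  assumes holo: "h holomorphic_on ball 0 1" and bd: "\<And>z. z \<in> ball 0 1 \<Longrightarrow> norm (h z) \<le> 1"
  shows "\<exists>h1. h1 holomorphic_on ball 0 1 \<and> (\<forall>z\<in>ball 0 1. norm (h1 z) \<le> 1) \<and>
     fps_nth (fps_expansion h 0) 1 = (1 - h 0 * cnj (h 0)) * fps_nth (fps_expansion h1 0) 0 \<and>
     fps_nth (fps_expansion h 0) 2 = (1 - h 0 * cnj (h 0)) *
        (fps_nth (fps_expansion h1 0) 1 - cnj (h 0) * (fps_nth (fps_expansion h1 0) 0)^2)"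
proof -
  define a where "a = h 0"
  define H where "H = fps_expansion h 0"
  have hH: "h has_fps_expansion H" unfolding H_def by (rule holo_exp[OF holo])
  have H0: "fps_nth H 0 = a" using exp_at0[OF hH] a_def by simp
  have a1: "norm a \<le> 1" using bd[of 0] by (simp add: a_def)
  show ?thesis
  proof (cases "norm a = 1")
    case True
    have "h constant_on ball 0 1"
      by (rule maximum_modulus_principle[OF holo _ _ _ order_refl, of 0]) (use bd True a_def in auto)
    then obtain c where c: "\<forall>z\<in>ball 0 1. h z = c" by (auto simp: constant_on_def)
    hence hc: "\<forall>z\<in>ball 0 1. h z = a" unfolding a_def by simp
    have "H = fps_const a" by (rule exp_unique[OF hH has_fps_expansion_const _ hc]) simp
    hence "fps_nth H 1 = 0" "fps_nth H 2 = 0" by simp_all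
    moreover have "a * cnj a = 1" using True by (simp add: complex_norm_square[symmetric])
    ultimately show ?thesis by (intro exI[of _ "\<lambda>_. 0"]) (auto simp: H_def a_def)
  next
    case False
    hence a_lt: "norm a < 1" using a1 by simp
    have hlt: "norm (h z) < 1" if "z \<in> ball 0 1" for z
    proof (rule ccontr)
      assume "\<not> norm (h z) < 1"
      hence eq: "norm (h z) = 1" using bd[OF that] by simp
      have "h constant_on ball 0 1"
        by (rule maximum_modulus_principle[OF holo _ _ _ order_refl that]) (use bd eq in auto)
      then obtain c where "\<forall>x\<in>ball 0 1. h x = c" by (auto simp: constant_on_def)
      hence "h 0 = h z" using that by simp
      thus False using eq a_lt a_def by simp
    qed
    have den: "1 - cnj a * h z \<noteq> 0" if "z \<in> ball 0 1" for z
    proof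
      assume "1 - cnj a * h z = 0"
      hence "norm (cnj a * h z) = 1" by (simp add: algebra_simps)
      moreover have "norm a * norm (h z) \<le> norm a"
        using hlt[OF that] by (intro mult_left_le) auto
      ultimately show False using a_lt by (simp add: norm_mult)
    qed
    define k where "k = (\<lambda>z. (h z - a) / (1 - cnj a * h z))"
    have kholo: "k holomorphic_on ball 0 1" unfolding k_def using den by (intro holomorphic_intros holo) auto
    have k0: "k 0 = 0" by (simp add: k_def a_def)
    have klt: "norm (k z) < 1" if "norm z < 1" for z
      unfolding k_def by (rule moebius_lt[OF a_lt hlt]) (use that in simp)
    have kle: "norm (k z) \<le> norm z" if "norm z < 1" for z
      using Schwarz_Lemma(1)[OF kholo k0 klt that] by blast
    have kd: "norm (deriv k 0) \<le> 1"
      using Schwarz_Lemma(2)[OF kholo k0 klt, of 0] by simp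
    define h1 where "h1 = (\<lambda>z. if z = 0 then deriv k 0 else (k z - k 0) / (z - 0))"
    have h1holo: "h1 holomorphic_on ball 0 1" unfolding h1_def by (rule pole_lemma[OF kholo]) simp
    have h1bd: "\<forall>z\<in>ball 0 1. norm (h1 z) \<le> 1"
    proof
      fix z :: complex assume z: "z \<in> ball 0 1"
      show "norm (h1 z) \<le> 1"
      proof (cases "z = 0")
        case True thus ?thesis using kd by (simp add: h1_def)
      next
        case False
        thus ?thesis using kle[of z] z by (simp add: h1_def k0 norm_divide divide_le_eq_1)
      qed
    qed
    have kz: "\<forall>z\<in>ball 0 1. k z = z * h1 z" by (simp add: h1_def k0)
    define K where "K = fps_expansion k 0"
    define H1 where "H1 = fps_expansion h1 0"
    have KX: "K = fps_X * H1" unfolding K_def H1_def by (rule mult_z_exp[OF kholo h1holo kz])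
    have prod: "K * (1 - fps_const (cnj a) * H) = H - fps_const a"
    proof (rule exp_unique[of "\<lambda>z. k z * (1 - cnj a * h z)" _ "\<lambda>z. h z - a"])
      show "(\<lambda>z. k z * (1 - cnj a * h z)) has_fps_expansion K * (1 - fps_const (cnj a) * H)"
        unfolding K_def
        by (intro has_fps_expansion_mult has_fps_expansion_diff has_fps_expansion_cmult_left
             has_fps_expansion_1 hH holo_exp kholo)
      show "(\<lambda>z. h z - a) has_fps_expansion H - fps_const a"
        by (intro has_fps_expansion_diff hH has_fps_expansion_const)
      show "\<forall>z\<in>ball 0 1. k z * (1 - cnj a * h z) = h z - a" using den by (simp add: k_def)
    qed simp
    have c1: "fps_nth (K * (1 - fps_const (cnj a) * H)) 1 = fps_nth H 1" using prod by simp
    have c2: "fps_nth (K * (1 - fps_const (cnj a) * H)) 2 = fps_nth H 2" using prod by simp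
    have K0: "fps_nth K 0 = 0" and K1: "fps_nth K 1 = fps_nth H1 0" and K2: "fps_nth K 2 = fps_nth H1 1"
      using KX by simp_all
    have e1: "fps_nth H 1 = (1 - a * cnj a) * fps_nth H1 0"
      using c1 K0 K1 H0 by (simp add: fps_mult_nth_1 algebra_simps)
    have "fps_nth H 2 = fps_nth K 1 * (- cnj a * fps_nth H 1) + fps_nth K 2 * (1 - cnj a * a)"
      using c2 K0 H0 by (simp add: fps_mult_nth eval_nat_numeral algebra_simps)
    also have "\<dots> = fps_nth H1 0 * (- cnj a * ((1 - a * cnj a) * fps_nth H1 0)) + fps_nth H1 1 * (1 - cnj a * a)"
      by (simp only: K1 K2 e1)
    also have "\<dots> = (1 - a * cnj a) * (fps_nth H1 1 - cnj a * (fps_nth H1 0)^2)"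
      by (simp add: algebra_simps power2_eq_square)
    finally have e2: "fps_nth H 2 = (1 - a * cnj a) * (fps_nth H1 1 - cnj a * (fps_nth H1 0)^2)" .
    show ?thesis using h1holo h1bd e1 e2 by (intro exI[of _ h1]) (simp add: H_def H1_def a_def)
  qed
qed


lemma cayley_lt:
  fixes p :: complex
  assumes "Re p > 0"
  shows "p + 1 \<noteq> 0" "norm ((p - 1) / (p + 1)) < 1"
proof -
  show ne: "p + 1 \<noteq> 0" using assms by (auto simp: complex_eq_iff)
  have "(norm (p - 1))^2 < (norm (p + 1))^2"
    using assms by (simp only: cmod_power2) (simp add: power2_eq_square algebra_simps)
  hence "norm (p - 1) < norm (p + 1)" by (rule power2_less_imp_less) simp
  thus "norm ((p - 1) / (p + 1)) < 1" using ne by (simp add: norm_divide divide_less_eq)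
qed

lemma coeff_rel:
  fixes W P :: "complex fps"
  assumes "W * (P + 1) = P - 1" "fps_nth W 0 = 0" "fps_nth P 0 = 1"
  shows "fps_nth P 1 = 2 * fps_nth W 1"
    "fps_nth P 2 = fps_nth W 1 * fps_nth P 1 + 2 * fps_nth W 2"
    "fps_nth P 3 = fps_nth W 1 * fps_nth P 2 + fps_nth W 2 * fps_nth P 1 + 2 * fps_nth W 3"
proof -
  have e: "fps_nth (W * (P + 1)) n = fps_nth (P - 1) n" for n using assms(1) by simp
  show "fps_nth P 1 = 2 * fps_nth W 1" using e[of 1] assms(2,3) by (simp add: fps_mult_nth_1 mult.commute)
  show "fps_nth P 2 = fps_nth W 1 * fps_nth P 1 + 2 * fps_nth W 2"
    using e[of 2] assms(2,3) by (simp add: fps_mult_nth eval_nat_numeral algebra_simps)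
  show "fps_nth P 3 = fps_nth W 1 * fps_nth P 2 + fps_nth W 2 * fps_nth P 1 + 2 * fps_nth W 3"
    using e[of 3] assms(2,3) by (simp add: fps_mult_nth eval_nat_numeral algebra_simps)
qed


lemma g3_ident:
  fixes a b c d1 d2 d3 :: complex
  assumes n: "d1 \<noteq> 0" "d2 \<noteq> 0" "d3 \<noteq> 0" and e: "d2 = 2*d1 - 1" "d3 = 3*d1 - 2"
  shows "((2*a^3+4*a*b+2*c)/d3 - (2*a/d1)*((2*a^2+2*b)/d2) + (2*a/d1)^3/3)/2
     = (c + (4*(d1-1)^2/(d1*d2))*a*b + ((1 + 5*(d1-1) + 9*(d1-1)^2 + 3*(d1-1)^3 + 6*(d1-1)^4)/(3*d1^3*d2))*a^3)/d3"
  using n apply (simp add: field_simps)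
  apply (simp only: e)
  apply algebra
  done
lemma g2_ident:
  fixes a b d1 d2 :: complex
  assumes n: "d1 \<noteq> 0" "d2 \<noteq> 0" and e: "d2 = 2*d1 - 1"
  shows "((2*a^2+2*b)/d2 - (2*a/d1)^2/2)/2 = (b + ((d1-1)^2/d1^2)*a^2)/d2"
  using n apply (simp add: field_simps)
  apply (simp only: e)
  apply algebra
  done


lemma conv_ge1:
  fixes A :: "complex fps"
  assumes "\<And>n. norm (fps_nth A n) \<le> C"
  shows "1 \<le> fps_conv_radius A"
  unfolding fps_conv_radius_def
proof (rule conv_radius_geI_ex')
  fix r :: real assume r: "0 < r" "ereal r < 1"
  hence r1: "r < 1" by simp
  have "summable (\<lambda>n. C * r^n)" using r r1 by (intro summable_mult summable_geometric) simp
  moreover have "norm (fps_nth A n * of_real r ^ n) \<le> C * r^n" for n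
  proof -
    have "norm (fps_nth A n * of_real r ^ n) = norm (fps_nth A n) * r^n" using r by (simp add: norm_mult norm_power)
    also have "\<dots> \<le> C * r^n" using r by (intro mult_right_mono assms) simp
    finally show ?thesis .
  qed
  ultimately show "summable (\<lambda>n. fps_nth A n * of_real r ^ n)"
    using summable_comparison_test[of "\<lambda>n. fps_nth A n * of_real r ^ n" "\<lambda>n. C * r^n"] by blast
qed

lemma re_cayley_pos:
  fixes p u :: complex
  assumes "norm u < 1" "p * (1 - u) = 1 + u"
  shows "Re p > 0"
proof -
  have "p * ((1 - u) * cnj (1 - u)) = (1 + u) * cnj (1 - u)" using assms(2) by (simp add: mult.assoc[symmetric])
  hence "p * of_real ((norm (1 - u))^2) = (1 + u) * cnj (1 - u)" by (simp only: complex_norm_square)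
  hence "Re (p * of_real ((norm (1 - u))^2)) = Re ((1 + u) * cnj (1 - u))" by (rule arg_cong)
  hence "Re p * (norm (1 - u))^2 = Re ((1 + u) * cnj (1 - u))" by simp
  also have "\<dots> = 1 - (norm u)^2" by (simp only: cmod_power2) (simp add: algebra_simps power2_eq_square)
  finally have eq: "Re p * (norm (1 - u))^2 = 1 - (norm u)^2" .
  have "(norm u)^2 < 1^2" using assms(1) by (intro power_strict_mono) auto
  hence "Re p * (norm (1 - u))^2 > 0" using eq by simp
  show ?thesis
  proof (rule ccontr)
    assume "\<not> Re p > 0"
    hence "Re p * (norm (1 - u))^2 \<le> 0" by (intro mult_nonpos_nonneg) auto
    thus False using \<open>Re p * (norm (1 - u))^2 > 0\<close> by linarith
  qed
qed


lemma eval_lin: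
  fixes A B :: "complex fps"
  assumes "1 \<le> fps_conv_radius A" "1 \<le> fps_conv_radius B" "norm z < 1"
  shows "eval_fps (fps_const c * A + fps_const d * B) z = c * eval_fps A z + d * eval_fps B z"
proof -
  have zA: "norm z < fps_conv_radius A" and zB: "norm z < fps_conv_radius B"
    using assms by (auto intro: less_le_trans[of _ 1] simp: one_ereal_def)
  have rA: "norm z < fps_conv_radius (fps_const c * A)"
    using zA fps_conv_radius_mult[of "fps_const c" A] by (simp add: less_le_trans min_def)
  have rB: "norm z < fps_conv_radius (fps_const d * B)"
    using zB fps_conv_radius_mult[of "fps_const d" B] by (simp add: less_le_trans min_def)
  show ?thesis using zA zB rA rB by (simp add: eval_fps_add eval_fps_mult)
qed




lemma upper_bound:
  fixes \<beta> :: real and f :: "complex \<Rightarrow> complex"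
  assumes b0: "0 \<le> \<beta>" and b1: "\<beta> \<le> 1" and cl: "class_A_beta \<beta> f"
  shows "norm (log_coeff f 1) \<le> 1 / (1 + (1 - \<beta>))"
    "norm (log_coeff f 2) \<le> 1 / (1 + 2 * (1 - \<beta>))"
    "norm (log_coeff f 3) \<le> 1 / (1 + 3 * (1 - \<beta>))"
proof -
  define T where "T = 1 - \<beta>"
  have T0: "0 \<le> T" "T \<le> 1" using b0 b1 by (auto simp: T_def)
  define \<tau> where "\<tau> = (of_real T :: complex)"
  have b\<tau>: "of_real \<beta> = 1 - \<tau>" by (simp add: \<tau>_def T_def)
  have holo: "f holomorphic_on ball 0 1" and f0: "f 0 = 0" and d1: "deriv f 0 = 1"
    and re: "\<forall>z\<in>ball 0 1. Re (of_real \<beta> * (if z = 0 then 1 else f z / z) + of_real (1 - \<beta>) * deriv f z) > 0"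
    using cl by (auto simp: class_A_beta_def class_A_def)
  define F where "F = fps_expansion f 0"
  have tc: "taylor_coeff f n = fps_nth F n" for n by (simp add: taylor_coeff_def F_def fps_expansion_def)
  have F1: "fps_nth F 1 = 1" by (simp add: F_def fps_expansion_def d1)
  define q where "q = (\<lambda>z. if z = 0 then deriv f 0 else (f z - f 0) / (z - 0))"
  have qholo: "q holomorphic_on ball 0 1" unfolding q_def by (rule pole_lemma[OF holo]) simp
  have qeq: "q z = (if z = 0 then 1 else f z / z)" for z by (simp add: q_def f0 d1)
  have fq: "\<forall>z\<in>ball 0 1. f z = z * q z" by (simp add: q_def f0)
  define Q where "Q = fps_expansion q 0"
  have FQ: "F = fps_X * Q" unfolding F_def Q_def by (rule mult_z_exp[OF holo qholo fq])
  have QF: "fps_nth Q n = fps_nth F (Suc n)" for n using FQ by simp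
  have dholo: "deriv f holomorphic_on ball 0 1" by (rule holomorphic_deriv[OF holo]) simp
  define p where "p = (\<lambda>z. of_real \<beta> * q z + \<tau> * deriv f z)"
  have pholo: "p holomorphic_on ball 0 1" unfolding p_def by (intro holomorphic_intros qholo dholo)
  have pre: "Re (p z) > 0" if "z \<in> ball 0 1" for z using re that by (simp add: p_def qeq \<tau>_def T_def)
  define P where "P = fps_expansion p 0"
  have PF: "P = fps_const (of_real \<beta>) * Q + fps_const \<tau> * fps_deriv F"
    unfolding P_def
  proof (rule exp_unique[OF holo_exp[OF pholo] _ zero_less_one])
    show "p has_fps_expansion fps_const (of_real \<beta>) * Q + fps_const \<tau> * fps_deriv F"
      unfolding p_def Q_def F_def
      by (intro has_fps_expansion_add has_fps_expansion_cmult_left has_fps_expansion_deriv holo_exp qholo holo)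
  qed simp
  have Pn: "fps_nth P n = (1 + of_nat n * \<tau>) * fps_nth F (Suc n)" for n
    by (simp add: PF QF b\<tau> algebra_simps)
  have P0: "fps_nth P 0 = 1" using Pn[of 0] F1 by simp
  have ne: "p z + 1 \<noteq> 0" if "z \<in> ball 0 1" for z using cayley_lt(1)[OF pre[OF that]] .
  define \<omega> where "\<omega> = (\<lambda>z. (p z - 1) / (p z + 1))"
  have \<omega>holo: "\<omega> holomorphic_on ball 0 1" unfolding \<omega>_def
    by (intro holomorphic_intros pholo) (use ne in auto)
  have p0: "p 0 = 1" by (simp add: p_def q_def d1 b\<tau>)
  have \<omega>0: "\<omega> 0 = 0" by (simp add: \<omega>_def p0)
  have \<omega>lt: "norm (\<omega> z) < 1" if "norm z < 1" for z
    using cayley_lt(2)[OF pre] that by (simp add: \<omega>_def)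
  obtain g where gholo: "g holomorphic_on ball 0 1" and gbd: "\<forall>z\<in>ball 0 1. norm (g z) \<le> 1"
    and gz: "\<forall>z\<in>ball 0 1. \<omega> z = z * g z"
    by (rule schwarz_div[OF \<omega>holo \<omega>0 \<omega>lt])
  define W where "W = fps_expansion \<omega> 0"
  define G where "G = fps_expansion g 0"
  have WG: "W = fps_X * G" unfolding W_def G_def by (rule mult_z_exp[OF \<omega>holo gholo gz])
  have WP: "W * (P + 1) = P - 1"
  proof (rule exp_unique[of "\<lambda>z. \<omega> z * (p z + 1)" _ "\<lambda>z. p z - 1"])
    show "(\<lambda>z. \<omega> z * (p z + 1)) has_fps_expansion W * (P + 1)" unfolding W_def P_def
      by (intro has_fps_expansion_mult has_fps_expansion_add has_fps_expansion_1 holo_exp \<omega>holo pholo)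
    show "(\<lambda>z. p z - 1) has_fps_expansion P - 1" unfolding P_def
      by (intro has_fps_expansion_diff has_fps_expansion_1 holo_exp pholo)
    show "\<forall>z\<in>ball 0 1. \<omega> z * (p z + 1) = p z - 1" using ne by (simp add: \<omega>_def)
  qed simp
  have W0: "fps_nth W 0 = 0" using WG by simp
  have W1: "fps_nth W 1 = fps_nth G 0" and W2: "fps_nth W 2 = fps_nth G 1" and W3: "fps_nth W 3 = fps_nth G 2"
    using WG by simp_all
  note cr = coeff_rel[OF WP W0 P0]
  define a where "a = fps_nth G 0"
  have ga: "g 0 = a" using exp_at0[OF holo_exp[OF gholo]] by (simp add: a_def G_def)
  obtain g1 where g1holo: "g1 holomorphic_on ball 0 1" and g1bd: "\<forall>z\<in>ball 0 1. norm (g1 z) \<le> 1"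
    and sG1: "fps_nth G 1 = (1 - a * cnj a) * fps_nth (fps_expansion g1 0) 0"
    and sG2: "fps_nth G 2 = (1 - a * cnj a) * (fps_nth (fps_expansion g1 0) 1 - cnj a * (fps_nth (fps_expansion g1 0) 0)^2)"
    using schur_step[OF gholo] gbd ga unfolding G_def by metis
  define s where "s = fps_nth (fps_expansion g1 0) 0"
  have g1s: "g1 0 = s" using exp_at0[OF holo_exp[OF g1holo]] by (simp add: s_def)
  obtain g2 where g2holo: "g2 holomorphic_on ball 0 1" and g2bd: "\<forall>z\<in>ball 0 1. norm (g2 z) \<le> 1"
    and sH1: "fps_nth (fps_expansion g1 0) 1 = (1 - s * cnj s) * fps_nth (fps_expansion g2 0) 0"
    using schur_step[OF g1holo] g1bd g1s by metis
  define u where "u = fps_nth (fps_expansion g2 0) 0"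
  have g2u: "g2 0 = u" using exp_at0[OF holo_exp[OF g2holo]] by (simp add: u_def)
  have na: "norm a \<le> 1" using gbd ga by force
  have ns: "norm s \<le> 1" using g1bd g1s by force
  have nu: "norm u \<le> 1" using g2bd g2u by force
  define b where "b = fps_nth G 1"
  define c where "c = fps_nth G 2"
  have bv: "b = (1 - a * cnj a) * s" using sG1 by (simp add: b_def s_def)
  have cv: "c = (1 - a * cnj a) * ((1 - s * cnj s) * u - cnj a * s^2)"
    using sG2 sH1 by (simp add: c_def s_def u_def)
  have nz1: "1 + \<tau> \<noteq> 0" and nz2: "1 + 2 * \<tau> \<noteq> 0" and nz3: "1 + 3 * \<tau> \<noteq> 0"
    using T0 by (auto simp: \<tau>_def complex_eq_iff)
  have F2: "fps_nth F 2 = 2 * a / (1 + \<tau>)"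
    using Pn[of 1] cr(1) W1 nz1 by (simp add: a_def field_simps eval_nat_numeral)
  have F3: "fps_nth F 3 = (2 * a^2 + 2 * b) / (1 + 2 * \<tau>)"
    using Pn[of 2] cr(1,2) W1 W2 nz2 by (simp add: a_def b_def field_simps eval_nat_numeral power2_eq_square)
  have F4: "fps_nth F 4 = (2 * a^3 + 4 * a * b + 2 * c) / (1 + 3 * \<tau>)"
    using Pn[of 3] cr W1 W2 W3 nz3 by (simp add: a_def b_def c_def field_simps eval_nat_numeral power2_eq_square)
  define d1 where "d1 = 1 + \<tau>"
  define d2 where "d2 = 1 + 2 * \<tau>"
  define d3 where "d3 = 1 + 3 * \<tau>"
  have nd1: "d1 \<noteq> 0" and nd2: "d2 \<noteq> 0" and nd3: "d3 \<noteq> 0" using nz1 nz2 nz3 by (simp_all add: d1_def d2_def d3_def)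
  have e2: "d2 = 2 * d1 - 1" and e3: "d3 = 3 * d1 - 2" by (simp_all add: d1_def d2_def d3_def)
  have \<tau>d: "\<tau> = d1 - 1" by (simp add: d1_def)
  note F2' = F2[folded d1_def] and F3' = F3[folded d2_def] and F4' = F4[folded d3_def]
  have lc1: "log_coeff f 1 = fps_nth F 2 / 2" by (simp add: log_coeff_def tc)
  have lc2: "log_coeff f 2 = (fps_nth F 3 - (fps_nth F 2)^2 / 2) / 2" by (simp add: log_coeff_def tc)
  have lc3: "log_coeff f 3 = (fps_nth F 4 - fps_nth F 2 * fps_nth F 3 + (fps_nth F 2)^3 / 3) / 2"
    by (simp add: log_coeff_def tc Let_def)
  have r1: "1 + \<tau> = of_real (1 + T)" and r2: "1 + 2 * \<tau> = of_real (1 + 2 * T)"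
    and r3: "1 + 3 * \<tau> = of_real (1 + 3 * T)" by (simp_all add: \<tau>_def)
  have pos1: "1 + T > 0" and pos2: "1 + 2 * T > 0" and pos3: "1 + 3 * T > 0" using T0 by auto
  have x1: "norm a ^ 2 \<le> 1" using na by (simp add: power_le_one)
  have nb: "norm b \<le> 1 - norm a ^ 2"
  proof -
    have "norm b = norm (1 - a * cnj a) * norm s" by (simp add: bv norm_mult)
    also have "1 - a * cnj a = of_real (1 - norm a ^ 2)" by (simp add: complex_norm_square[symmetric])
    also have "norm (complex_of_real (1 - norm a ^ 2)) = 1 - norm a ^ 2" using x1 by (subst norm_of_real) simp
    finally show ?thesis using ns x1 by (simp add: mult_left_le)
  qed
  show "norm (log_coeff f 1) \<le> 1 / (1 + (1 - \<beta>))"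
  proof -
    have "log_coeff f 1 = a / d1" unfolding lc1 F2' using nd1 by (simp add: field_simps)
    also have "d1 = of_real (1 + T)" by (simp add: d1_def r1)
    finally have "log_coeff f 1 = a / of_real (1 + T)" .
    hence "norm (log_coeff f 1) = norm a / (1 + T)" by (simp only: norm_divide norm_of_real abs_of_pos[OF pos1])
    also have "\<dots> \<le> 1 / (1 + T)" using na pos1 by (intro divide_right_mono) auto
    finally show ?thesis by (simp add: T_def)
  qed
  show "norm (log_coeff f 2) \<le> 1 / (1 + 2 * (1 - \<beta>))"
  proof -
    define l where "l = T^2 / (1 + T)^2"
    have l01: "0 \<le> l" "l \<le> 1" using T0 pos1 by (auto simp: l_def power_mono)
    have lr: "of_real l = (d1 - 1)^2 / d1^2" by (simp add: l_def d1_def \<tau>_def)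
    have "log_coeff f 2 = (b + of_real l * a^2) / (1 + 2 * \<tau>)"
      unfolding lc2 F2' F3' lr d2_def[symmetric] by (rule g2_ident[OF nd1 nd2 e2])
    hence "norm (log_coeff f 2) = norm (b + of_real l * a^2) / (1 + 2 * T)"
      by (simp only: norm_divide r2 norm_of_real abs_of_pos[OF pos2])
    also have "\<dots> \<le> 1 / (1 + 2 * T)"
    proof (intro divide_right_mono)
      have "norm (b + of_real l * a^2) \<le> norm b + l * norm a ^ 2"
        using norm_triangle_ineq[of b "of_real l * a^2"] l01 by (simp add: norm_mult norm_power)
      also have "\<dots> \<le> 1 - norm a ^ 2 + 1 * norm a ^ 2"
        using nb l01 by (intro add_mono mult_right_mono) auto
      finally show "norm (b + of_real l * a^2) \<le> 1" by simp
    qed (use pos2 in auto)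
    finally show ?thesis by (simp add: T_def)
  qed
  show "norm (log_coeff f 3) \<le> 1 / (1 + 3 * (1 - \<beta>))"
  proof -
    define \<mu> where "\<mu> = 4 * T^2 / ((1 + T) * (1 + 2 * T))"
    define \<nu> where "\<nu> = (1 + 5 * T + 9 * T^2 + 3 * T^3 + 6 * T^4) / (3 * (1 + T)^3 * (1 + 2 * T))"
    have \<mu>0: "0 \<le> \<mu>" using T0 by (simp add: \<mu>_def)
    have \<mu>1: "\<mu> \<le> 2/3"
    proof -
      have tt: "T * T \<le> T * 1" using T0 by (intro mult_left_mono) auto
      have "4 * T^2 * 3 \<le> 2 * ((1 + T) * (1 + 2 * T))" using T0 tt by (simp add: power2_eq_square algebra_simps)
      thus ?thesis using pos1 pos2 by (simp add: \<mu>_def divide_le_eq)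
    qed
    have \<nu>0: "0 \<le> \<nu>" using T0 by (simp add: \<nu>_def)
    have \<nu>1: "\<nu> \<le> 7/9"
    proof -
      have t4: "T^4 \<le> 1" using T0 by (simp add: power_le_one)
      have Dx: "3 * (1 + T)^3 * (1 + 2 * T) = 3 + 15 * T + 27 * T^2 + 21 * T^3 + 6 * T^4"
        by (simp add: algebra_simps power2_eq_square power3_eq_cube power4_eq_xxxx)
      have "T^2 \<ge> 0" "T^3 \<ge> 0" using T0 by auto
      hence "(1 + 5 * T + 9 * T^2 + 3 * T^3 + 6 * T^4) * 9 \<le> 7 * (3 * (1 + T)^3 * (1 + 2 * T))"
        unfolding mult.assoc[of 7] Dx using T0 t4 by (simp add: ring_distribs; linarith)
      thus ?thesis using pos1 pos2 by (simp add: \<nu>_def divide_le_eq)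
    qed
    have mr: "of_real \<mu> = 4*(d1-1)^2/(d1*d2)" by (simp add: \<mu>_def d1_def d2_def \<tau>_def)
    have nr: "of_real \<nu> = (1 + 5*(d1-1) + 9*(d1-1)^2 + 3*(d1-1)^3 + 6*(d1-1)^4)/(3*d1^3*d2)"
      by (simp add: \<nu>_def d1_def d2_def \<tau>_def)
    have "log_coeff f 3 = (c + of_real \<mu> * a * b + of_real \<nu> * a^3) / (1 + 3 * \<tau>)"
      unfolding lc3 F2' F3' F4' mr nr d3_def[symmetric] by (rule g3_ident[OF nd1 nd2 nd3 e2 e3])
    hence "norm (log_coeff f 3) = norm (c + of_real \<mu> * a * b + of_real \<nu> * a^3) / (1 + 3 * T)"
      by (simp only: norm_divide r3 norm_of_real abs_of_pos[OF pos3])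
    also have "\<dots> \<le> 1 / (1 + 3 * T)"
    proof (intro divide_right_mono)
      show "norm (c + of_real \<mu> * a * b + of_real \<nu> * a^3) \<le> 1"
        unfolding bv cv by (rule key_ineq[OF na ns nu \<mu>0 \<mu>1 \<nu>0 \<nu>1])
    qed (use pos3 in auto)
    finally show ?thesis by (simp add: T_def)
  qed
qed


lemma half_two: "2 / x / 2 = 1 / (x :: real)"
  by simp

definition ext_F :: "real \<Rightarrow> nat \<Rightarrow> complex fps" where
  "ext_F \<beta> m = Abs_fps (\<lambda>n. if n = 0 then 0 else if n = 1 then 1
      else if m dvd (n - 1) then complex_of_real (2 / (1 + real (n - 1) * (1 - \<beta>))) else 0)"

definition ext_P :: "nat \<Rightarrow> complex fps" where
  "ext_P m = Abs_fps (\<lambda>n. if n = 0 then 1 else if m dvd n then 2 else 0)"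

lemma ext_P_mult:
  assumes "1 \<le> m"
  shows "ext_P m * (1 - fps_X ^ m) = 1 + fps_X ^ m"
proof (rule fps_ext)
  fix n
  have "fps_nth (ext_P m * (1 - fps_X ^ m)) n = fps_nth (ext_P m) n - (if n < m then 0 else fps_nth (ext_P m) (n - m))"
    by (simp add: ring_distribs fps_X_power_mult_right_nth)
  also have "\<dots> = fps_nth (1 + fps_X ^ m) n"
  proof -
    consider "n = 0" | "0 < n" "n < m" | "n = m" | "m < n" by linarith
    thus ?thesis
    proof cases
      case 1 thus ?thesis using assms by (simp add: ext_P_def)
    next
      case 2 thus ?thesis by (auto simp: ext_P_def dest: dvd_imp_le)
    next
      case 3 thus ?thesis using assms by (simp add: ext_P_def)
    next
      case 4 thus ?thesis using assms by (auto simp: ext_P_def dvd_minus_self)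
    qed
  qed
  finally show "fps_nth (ext_P m * (1 - fps_X ^ m)) n = fps_nth (1 + fps_X ^ m) n" .
qed

lemma sharp_class:
  fixes \<beta> :: real and m :: nat
  assumes b0: "0 \<le> \<beta>" and b1: "\<beta> \<le> 1" and m1: "1 \<le> m"
  shows "class_A_beta \<beta> (eval_fps (ext_F \<beta> m))"
proof -
  define T where "T = 1 - \<beta>"
  have T0: "0 \<le> T" "T \<le> 1" using b0 b1 by (auto simp: T_def)
  define F where "F = ext_F \<beta> m"
  define P where "P = ext_P m"
  define f where "f = eval_fps F"
  have Fn: "fps_nth F n = (if n = 0 then 0 else if n = 1 then 1
      else if m dvd (n - 1) then complex_of_real (2 / (1 + real (n - 1) * T)) else 0)" for n
    by (simp add: F_def ext_F_def T_def)
  have Fb: "norm (fps_nth F n) \<le> 2" for n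
  proof -
    have p1: "1 \<le> 1 + real (n - 1) * T" using T0 by simp
    have "2 / (1 + real (n - 1) * T) \<le> 2 / 1" by (rule divide_left_mono) (use p1 in auto)
    moreover have "0 \<le> 2 / (1 + real (n - 1) * T)" using T0 by simp
    ultimately have main: "norm (complex_of_real (2 / (1 + real (n - 1) * T))) \<le> 2"
      by (subst norm_of_real, subst abs_of_nonneg) auto
    show ?thesis
    proof (cases "n = 0 \<or> n = 1 \<or> \<not> m dvd (n - 1)")
      case True thus ?thesis by (auto simp: Fn)
    next
      case False
      hence "fps_nth F n = complex_of_real (2 / (1 + real (n - 1) * T))" by (simp add: Fn)
      thus ?thesis using main by (simp only:)
    qed
  qed
  have Pb: "norm (fps_nth P n) \<le> 2" for n by (simp add: P_def ext_P_def)
  have rF: "1 \<le> fps_conv_radius F" by (rule conv_ge1[OF Fb])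
  have rP: "1 \<le> fps_conv_radius P" by (rule conv_ge1[OF Pb])
  have rD: "1 \<le> fps_conv_radius (fps_deriv F)" using rF fps_conv_radius_deriv[of F] by (rule order_trans)
  have rS: "1 \<le> fps_conv_radius (fps_shift 1 F)" using rF by simp
  have lt: "norm z < fps_conv_radius G" if "norm z < 1" "1 \<le> fps_conv_radius G" for z :: complex and G :: "complex fps"
    using that by (auto intro: less_le_trans[of _ 1] simp: one_ereal_def)
  have holo: "f holomorphic_on ball 0 1" unfolding f_def
    by (rule holomorphic_on_eval_fps, rule ball_eball_mono) (use rF in \<open>simp add: one_ereal_def\<close>)
  have f0: "f 0 = 0" by (simp add: f_def eval_fps_at_0 Fn)
  have hx: "f has_fps_expansion F" unfolding f_def
    by (rule eval_fps_has_fps_expansion) (use rF in \<open>auto intro: less_le_trans[of _ 1] simp: one_ereal_def\<close>)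
  have d1: "deriv f 0 = 1" using fps_nth_fps_expansion[OF hx, of 1] by (simp add: Fn)
  have sub: "subdegree F = 1" by (rule subdegreeI) (auto simp: Fn)
  have PF: "fps_const (of_real \<beta>) * fps_shift 1 F + fps_const (of_real T) * fps_deriv F = P"
  proof (rule fps_ext)
    fix n
    have "fps_nth (fps_const (of_real \<beta>) * fps_shift 1 F + fps_const (of_real T) * fps_deriv F) n
        = (of_real \<beta> + of_real T * of_nat (Suc n)) * fps_nth F (Suc n)"
      by (simp add: algebra_simps)
    also have "of_real \<beta> + of_real T * of_nat (Suc n) = (of_real (1 + real n * T) :: complex)"
      by (simp add: T_def algebra_simps)
    finally have eq: "fps_nth (fps_const (of_real \<beta>) * fps_shift 1 F + fps_const (of_real T) * fps_deriv F) n
        = of_real (1 + real n * T) * fps_nth F (Suc n)" .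
    show "fps_nth (fps_const (of_real \<beta>) * fps_shift 1 F + fps_const (of_real T) * fps_deriv F) n = fps_nth P n"
    proof (cases "n = 0")
      case True thus ?thesis unfolding eq by (simp add: Fn P_def ext_P_def)
    next
      case False
      have pos: "1 + real n * T > 0" using T0 by (simp add: add_pos_nonneg)
      have "of_real (1 + real n * T) * of_real (2 / (1 + real n * T)) = (2 :: complex)"
      proof -
        have ne: "1 + real n * T \<noteq> 0" using pos by linarith
        have "(1 + real n * T) * (2 / (1 + real n * T)) = 2" by (simp only: times_divide_eq_right nonzero_mult_div_cancel_left[OF ne])
        hence "of_real ((1 + real n * T) * (2 / (1 + real n * T))) = (2 :: complex)" by simp
        thus ?thesis by (simp only: of_real_mult)
      qed
      thus ?thesis unfolding eq using False by (simp add: Fn P_def ext_P_def)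
    qed
  qed
  have re: "Re (of_real \<beta> * (if z = 0 then 1 else f z / z) + of_real (1 - \<beta>) * deriv f z) > 0"
    if z: "z \<in> ball 0 1" for z
  proof (cases "z = 0")
    case True thus ?thesis using d1 by (simp add: T_def)
  next
    case False
    have nz: "norm z < 1" using z by simp
    have e1: "eval_fps (fps_shift 1 F) z = f z / z"
      using eval_fps_shift[of 1 F z] sub lt[OF nz rF] False by (simp add: f_def)
    have e2: "eval_fps (fps_deriv F) z = deriv f z"
      unfolding f_def by (rule eval_fps_deriv[OF lt[OF nz rF]])
    have e3: "eval_fps P z = of_real \<beta> * (f z / z) + of_real T * deriv f z"
      unfolding PF[symmetric] eval_lin[OF rS rD nz] e1 e2 ..
    have rX: "1 \<le> fps_conv_radius (1 - fps_X ^ m :: complex fps)"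
      using fps_conv_radius_diff[of "1 :: complex fps" "fps_X ^ m"] by simp
    have "eval_fps (P * (1 - fps_X ^ m)) z = eval_fps P z * eval_fps (1 - fps_X ^ m) z"
      by (rule eval_fps_mult[OF lt[OF nz rP] lt[OF nz rX]])
    also have "eval_fps (1 - fps_X ^ m) z = 1 - z ^ m"
      by (subst eval_fps_diff) auto
    finally have e4: "eval_fps P z * (1 - z ^ m) = 1 + z ^ m"
      unfolding P_def ext_P_mult[OF m1] by (subst (asm) eval_fps_add) auto
    have "norm (z ^ m) < 1" using nz m1 by (simp add: norm_power power_less_one_iff)
    hence "Re (eval_fps P z) > 0" by (rule re_cayley_pos) (use e4 in simp)
    thus ?thesis using False e3 by (simp add: T_def)
  qed
  show ?thesis unfolding class_A_beta_def class_A_def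
    using holo f0 d1 re unfolding f_def F_def by blast
qed


lemma ext_F_coeff:
  fixes \<beta> :: real
  assumes b0: "0 \<le> \<beta>" and b1: "\<beta> \<le> 1"
  shows "taylor_coeff (eval_fps (ext_F \<beta> m)) n = fps_nth (ext_F \<beta> m) n"
proof -
  define T where "T = 1 - \<beta>"
  have T0: "0 \<le> T" "T \<le> 1" using b0 b1 by (auto simp: T_def)
  define F where "F = ext_F \<beta> m"
  have Fn: "fps_nth F n = (if n = 0 then 0 else if n = 1 then 1
      else if m dvd (n - 1) then complex_of_real (2 / (1 + real (n - 1) * T)) else 0)" for n
    by (simp add: F_def ext_F_def T_def)
  have Fb: "norm (fps_nth F n) \<le> 2" for n
  proof -
    have p1: "1 \<le> 1 + real (n - 1) * T" using T0 by simp
    have "2 / (1 + real (n - 1) * T) \<le> 2 / 1" by (rule divide_left_mono) (use p1 in auto)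
    moreover have "0 \<le> 2 / (1 + real (n - 1) * T)" using T0 by simp
    ultimately have main: "norm (complex_of_real (2 / (1 + real (n - 1) * T))) \<le> 2"
      by (subst norm_of_real, subst abs_of_nonneg) auto
    show ?thesis
    proof (cases "n = 0 \<or> n = 1 \<or> \<not> m dvd (n - 1)")
      case True thus ?thesis by (auto simp: Fn)
    next
      case False
      hence "fps_nth F n = complex_of_real (2 / (1 + real (n - 1) * T))" by (simp add: Fn)
      thus ?thesis using main by (simp only:)
    qed
  qed
  have rF: "1 \<le> fps_conv_radius F" by (rule conv_ge1[OF Fb])
  have hx: "eval_fps F has_fps_expansion F"
    by (rule eval_fps_has_fps_expansion) (use rF in \<open>auto intro: less_le_trans[of _ 1] simp: one_ereal_def\<close>)
  show ?thesis using fps_nth_fps_expansion[OF hx, of n] by (simp add: taylor_coeff_def F_def)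
qed

lemma sharp_val:
  fixes \<beta> :: real and m :: nat
  assumes b0: "0 \<le> \<beta>" and b1: "\<beta> \<le> 1" and m: "m \<in> {1,2,3}"
  shows "norm (log_coeff (eval_fps (ext_F \<beta> m)) m) = 1 / (real (m + 1) - real m * \<beta>)"
proof -
  define T where "T = 1 - \<beta>"
  have T0: "0 \<le> T" "T \<le> 1" using b0 b1 by (auto simp: T_def)
  define f where "f = eval_fps (ext_F \<beta> m)"
  have tc: "taylor_coeff f n = (if n = 0 then 0 else if n = 1 then 1
      else if m dvd (n - 1) then complex_of_real (2 / (1 + real (n - 1) * T)) else 0)" for n
    unfolding f_def ext_F_coeff[OF b0 b1] by (simp add: ext_F_def T_def)
  have lc: "log_coeff f m = complex_of_real (2 / (1 + real m * T)) / 2"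
    using m by (auto simp: log_coeff_def tc Let_def)
  have pos: "0 \<le> 2 / (1 + real m * T)" using T0 by simp
  have "norm (log_coeff f m) = 2 / (1 + real m * T) / 2"
    unfolding lc by (simp only: norm_divide norm_of_real abs_of_nonneg[OF pos] norm_numeral)
  also have "\<dots> = 1 / (1 + real m * T)" by (rule half_two)
  also have "1 + real m * T = real (m + 1) - real m * \<beta>" by (simp add: T_def algebra_simps)
  finally show ?thesis by (simp add: f_def)
qed

theorem theorem2p1:
  fixes \<beta> :: real
  assumes "0 \<le> \<beta>" and "\<beta> \<le> 1"
  shows "(\<forall>f. class_A_beta \<beta> f \<longrightarrow>
            (\<forall>m\<in>{1,2,3::nat}. norm (log_coeff f m) \<le> 1 / (real (m + 1) - real m * \<beta>)))
       \<and> (\<forall>m\<in>{1,2,3::nat}. \<exists>f. class_A_beta \<beta> f \<and>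
            norm (log_coeff f m) = 1 / (real (m + 1) - real m * \<beta>))"
proof (intro conjI allI impI ballI)
  fix f :: "complex \<Rightarrow> complex" and m :: nat
  assume cl: "class_A_beta \<beta> f" and m: "m \<in> {1,2,3}"
  note ub = upper_bound[OF assms cl]
  show "norm (log_coeff f m) \<le> 1 / (real (m + 1) - real m * \<beta>)"
    using m ub by (auto simp: algebra_simps)
next
  fix m :: nat assume m: "m \<in> {1,2,3}"
  hence "1 \<le> m" by auto
  show "\<exists>f. class_A_beta \<beta> f \<and> norm (log_coeff f m) = 1 / (real (m + 1) - real m * \<beta>)"
    by (intro exI[of _ "eval_fps (ext_F \<beta> m)"] conjI sharp_class sharp_val assms m \<open>1 \<le> m\<close>)
qed


end
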